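(* For every integer $\Delta\ge 3$ and every integer $g\ge 3$, there exists a $\Delta$-regular bipartite graph $G$ with girth at least $g$ such that $\chi'_{inj}(G)\ge \Delta$.
   Context: All graphs are finite and simple. An edge coloring of a graph $G$ (not necessarily proper) is \emph{injective} if any two distinct edges $e,f$ receive distinct colors whenever either (i) $e$ and $f$ share no vertex and some edge of $G$ joins an endpoint of $e$ to an endpoint of $f$, or (ii) $e$ and $f$ lie in a common triangle of $G$. The injective chromatic index $\chi'_{inj}(G)$ is the minimum number of colors in an injective edge coloring of $G$. *)

theory Defs
  imports Main
begin

definition simple_graph :: "'a set \<Rightarrow> ('a \<Rightarrow> 'a \<Rightarrow> bool) \<Rightarrow> bool" where
  "simple_graph V E \<longleftrightarrow> finite V \<and> (\<forall>u v. E u v \<longrightarrow> u \<in> V \<and> v \<in> V)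
     \<and> (\<forall>u v. E u v \<longrightarrow> E v u) \<and> (\<forall>v. \<not> E v v)"

definition edges :: "('a \<Rightarrow> 'a \<Rightarrow> bool) \<Rightarrow> 'a set set" where
  "edges E = {{u, v} | u v. E u v}"

definition degree :: "'a set \<Rightarrow> ('a \<Rightarrow> 'a \<Rightarrow> bool) \<Rightarrow> 'a \<Rightarrow> nat" where
  "degree V E v = card {u \<in> V. E v u}"

definition regular :: "'a set \<Rightarrow> ('a \<Rightarrow> 'a \<Rightarrow> bool) \<Rightarrow> nat \<Rightarrow> bool" where
  "regular V E d \<longleftrightarrow> (\<forall>v \<in> V. degree V E v = d)"

definition bipartite :: "'a set \<Rightarrow> ('a \<Rightarrow> 'a \<Rightarrow> bool) \<Rightarrow> bool" where
  "bipartite V E \<longleftrightarrow> (\<exists>A B. A \<union> B = V \<and> A \<inter> B = {} \<and>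
      (\<forall>u v. E u v \<longrightarrow> (u \<in> A \<and> v \<in> B) \<or> (u \<in> B \<and> v \<in> A)))"

definition is_cycle :: "('a \<Rightarrow> 'a \<Rightarrow> bool) \<Rightarrow> 'a list \<Rightarrow> bool" where
  "is_cycle E cs \<longleftrightarrow> length cs \<ge> 3 \<and> distinct cs \<and>
     (\<forall>i < length cs. E (cs ! i) (cs ! ((i + 1) mod length cs)))"

definition girth_at_least :: "('a \<Rightarrow> 'a \<Rightarrow> bool) \<Rightarrow> nat \<Rightarrow> bool" where
  "girth_at_least E g \<longleftrightarrow> (\<forall>cs. is_cycle E cs \<longrightarrow> length cs \<ge> g)"

definition injective_edge_coloring :: "('a \<Rightarrow> 'a \<Rightarrow> bool) \<Rightarrow> ('a set \<Rightarrow> nat) \<Rightarrow> bool" where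
  "injective_edge_coloring E c \<longleftrightarrow>
     (\<forall>e \<in> edges E. \<forall>f \<in> edges E. e \<noteq> f \<and>
        ((e \<inter> f = {} \<and> (\<exists>x \<in> e. \<exists>y \<in> f. E x y)) \<or>
         (\<exists>x y z. E x y \<and> E y z \<and> E x z \<and> e \<subseteq> {x, y, z} \<and> f \<subseteq> {x, y, z}))
        \<longrightarrow> c e \<noteq> c f)"

definition inj_chromatic_index :: "('a \<Rightarrow> 'a \<Rightarrow> bool) \<Rightarrow> nat" where
  "inj_chromatic_index E =
     (LEAST k. \<exists>c. injective_edge_coloring E c \<and> card (c ` edges E) \<le> k)"

end

theory Submission
  imports Defs
begin

definition leafc :: "('a \<times> 'a) set \<Rightarrow> 'a \<Rightarrow> bool" where
  "leafc D x \<longleftrightarrow> (\<forall>y y'. (x,y) \<in> D \<longrightarrow> (x,y') \<in> D \<longrightarrow> y = y')"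

lemma icD0: "injective_edge_coloring E c \<Longrightarrow> e \<in> edges E \<Longrightarrow> f \<in> edges E \<Longrightarrow> e \<noteq> f \<Longrightarrow> e \<inter> f = {} \<Longrightarrow> x \<in> e \<Longrightarrow> y \<in> f \<Longrightarrow> E x y \<Longrightarrow> c e \<noteq> c f"
  unfolding injective_edge_coloring_def by blast

lemma class_bound:
  fixes V :: "'a::linorder set"
  assumes sg: "simple_graph V E" and reg: "regular V E \<Delta>"
    and tf: "\<And>x y z. E x y \<Longrightarrow> E y z \<Longrightarrow> E x z \<Longrightarrow> False"
    and ic: "injective_edge_coloring E c"
    and Dd: "D = {(x,y). E x y \<and> c {x,y} = \<alpha>}" and Dne: "D \<noteq> {}"
  shows "(\<Delta> - 1) * card D + 2 * \<Delta> \<le> \<Delta> * card V"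
proof -
  have fin: "finite V" and inV: "\<And>u v. E u v \<Longrightarrow> u \<in> V \<and> v \<in> V"
    and sym: "\<And>u v. E u v \<Longrightarrow> E v u" and irr: "\<And>v. \<not> E v v"
    using sg by (auto simp: simple_graph_def)
  have deg: "\<And>v. v \<in> V \<Longrightarrow> card {u \<in> V. E v u} = \<Delta>"
    using reg by (simp add: regular_def degree_def)
  have edI: "\<And>x y. E x y \<Longrightarrow> {x,y} \<in> edges E" by (auto simp: edges_def)
  have icD: "c e \<noteq> c f" if "e \<in> edges E" "f \<in> edges E" "e \<noteq> f" "e \<inter> f = {}"
      "x \<in> e" "y \<in> f" "E x y" for e f x y
    using icD0[OF ic] that by blast
  have Dsym: "(x,y) \<in> D \<Longrightarrow> (y,x) \<in> D" for x y using sym by (auto simp: Dd insert_commute)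
  have DE: "(x,y) \<in> D \<Longrightarrow> E x y" for x y by (simp add: Dd)
  define S where "S = fst ` D"
  have Smem: "x \<in> S \<longleftrightarrow> (\<exists>z. (x,z) \<in> D)" for x unfolding S_def by force
  have SV: "S \<subseteq> V" using inV by (auto simp: S_def Dd)
  have finS: "finite S" using SV fin finite_subset by blast
  have finD: "finite D"
  proof -
    have "D \<subseteq> V \<times> V" using inV by (auto simp: Dd)
    thus ?thesis using fin finite_subset by blast
  qed
  have key1: "(x,y) \<in> D" if hx: "x \<in> S" and hy: "y \<in> S" and hxy: "E x y" for x y
  proof (rule ccontr)
    assume nd: "(x,y) \<notin> D"
    obtain z where xz: "(x,z) \<in> D" using Smem[of x] hx by blast
    obtain w where yw: "(y,w) \<in> D" using Smem[of y] hy by blast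
    have cxy: "c {x,y} \<noteq> \<alpha>" using nd hxy by (simp add: Dd)
    have "x \<noteq> y" using irr hxy by auto
    moreover have "x \<noteq> w"
    proof
      assume "x = w"
      hence "c {y,x} = \<alpha>" using yw by (simp add: Dd)
      moreover have "{y,x} = {x,y}" by blast
      ultimately show False using cxy by simp
    qed
    moreover have "z \<noteq> y" using xz cxy by (auto simp: Dd)
    moreover have "z \<noteq> w" using tf[of x y z] DE[OF xz] DE[OF yw] hxy by auto
    ultimately have d1: "{x,z} \<inter> {y,w} = {}" and d2: "{x,z} \<noteq> {y,w}" by auto
    have "c {x,z} \<noteq> c {y,w}"
      by (rule icD[OF edI[OF DE[OF xz]] edI[OF DE[OF yw]] d2 d1 _ _ hxy]) auto
    thus False using xz yw by (simp add: Dd)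
  qed
  have leaf: "leafc D x \<or> leafc D y" if xy: "(x,y) \<in> D" for x y
  proof (rule ccontr)
    assume a: "\<not> (leafc D x \<or> leafc D y)"
    obtain z where xz: "(x,z) \<in> D" "z \<noteq> y" using a unfolding leafc_def by metis
    obtain w where yw: "(y,w) \<in> D" "w \<noteq> x" using a unfolding leafc_def by metis
    have "x \<noteq> y" using irr DE xy by auto
    moreover have "z \<noteq> w" using tf[of x y z] xz yw DE xy by auto
    ultimately have d1: "{x,z} \<inter> {y,w} = {}" and d2: "{x,z} \<noteq> {y,w}" using xz yw by auto
    have "c {x,z} \<noteq> c {y,w}"
      by (rule icD[OF edI[OF DE[OF xz(1)]] edI[OF DE[OF yw(1)]] d2 d1 _ _ DE[OF xy]]) auto
    thus False using xz yw by (simp add: Dd)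
  qed
  define T where "T = Sigma S (\<lambda>x. {y \<in> V. E x y})"
  define X where "X = {(x,y). x \<in> S \<and> y \<in> V - S \<and> E x y}"
  have cardT: "card T = \<Delta> * card S"
  proof -
    have "card T = (\<Sum>x\<in>S. card {y \<in> V. E x y})" unfolding T_def
      using finS fin by (subst card_SigmaI) auto
    also have "\<dots> = (\<Sum>x\<in>S. \<Delta>)" using deg SV by (intro sum.cong) auto
    finally show ?thesis by simp
  qed
  have TDX: "T = D \<union> X"
  proof
    show "T \<subseteq> D \<union> X" using key1 by (auto simp: T_def X_def)
    show "D \<union> X \<subseteq> T" using DE inV Smem by (auto simp: T_def X_def)
  qed
  have finX: "finite X"
  proof -
    have "X \<subseteq> V \<times> V" using SV by (auto simp: X_def)
    thus ?thesis using fin finite_subset by blast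
  qed
  have DX: "D \<inter> X = {}" using Dsym Smem by (auto simp: X_def)
  have c1: "\<Delta> * card S = card D + card X"
    using cardT TDX card_Un_disjoint[OF finD finX DX] by simp
  define X' where "X' = Sigma (V - S) (\<lambda>y. {x \<in> V. E y x})"
  have "X \<subseteq> (\<lambda>(a,b). (b,a)) ` X'" using sym inV by (auto simp: X_def X'_def image_iff)
  moreover have "X' \<subseteq> V \<times> V" using inV by (auto simp: X'_def)
  moreover have "finite (V \<times> V)" using fin by simp
  ultimately have "card X \<le> card X'"
    by (meson card_image_le card_mono finite_imageI finite_subset order_trans)
  also have "card X' = (\<Sum>y\<in>V - S. card {x \<in> V. E y x})" unfolding X'_def
    using fin by (subst card_SigmaI) auto
  also have "\<dots> = (\<Sum>y\<in>V-S. \<Delta>)" using deg by (intro sum.cong) auto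
  finally have c2: "card X \<le> \<Delta> * card (V - S)" by (simp add: mult.commute)
  have c3: "card V = card S + card (V - S)"
  proof -
    have "card (V - S) = card V - card S" using SV finS by (simp add: card_Diff_subset)
    moreover have "card S \<le> card V" using SV fin by (simp add: card_mono)
    ultimately show ?thesis by simp
  qed
  define P where "P = {(x,y) \<in> D. leafc D x \<and> (leafc D y \<longrightarrow> x < y)}"
  have PD: "D = P \<union> (\<lambda>(a,b). (b,a)) ` P"
  proof
    show "D \<subseteq> P \<union> (\<lambda>(a,b). (b,a)) ` P"
    proof
      fix p assume "p \<in> D"
      then obtain x y where p: "p = (x,y)" "(x,y) \<in> D" by (cases p) auto
      have "x \<noteq> y" using irr DE p by auto
      have "(x,y) \<in> P \<or> (y,x) \<in> P"
        using leaf[OF p(2)] p(2) Dsym[OF p(2)] \<open>x \<noteq> y\<close> unfolding P_def by auto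
      thus "p \<in> P \<union> (\<lambda>(a,b). (b,a)) ` P"
        using p(1) by (auto intro: rev_image_eqI[of "(y,x)"])
    qed
    show "P \<union> (\<lambda>(a,b). (b,a)) ` P \<subseteq> D" using Dsym by (auto simp: P_def)
  qed
  have finP: "finite P" using finD by (rule rev_finite_subset) (auto simp: P_def)
  have Pdisj: "P \<inter> (\<lambda>(a,b). (b,a)) ` P = {}" by (auto simp: P_def)
  have "card ((\<lambda>(a,b). (b,a)) ` P) = card P"
    by (rule card_image) (auto simp: inj_on_def)
  hence cD: "card D = 2 * card P"
    using PD card_Un_disjoint[OF finP finite_imageI[OF finP] Pdisj] by simp
  have injP: "inj_on fst P" by (auto simp: inj_on_def P_def leafc_def)
  obtain x0 y0 where p0: "(x0,y0) \<in> P"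
  proof -
    from Dne obtain p where "p \<in> D" by auto
    hence "p \<in> P \<or> p \<in> (\<lambda>(a,b). (b,a)) ` P" using PD by auto
    thus ?thesis using that by (cases p) auto
  qed
  have y0n: "y0 \<notin> fst ` P"
  proof
    assume "y0 \<in> fst ` P"
    then obtain z where yz: "(y0, z) \<in> P" by force
    have "leafc D y0" using yz by (simp add: P_def)
    moreover have "(y0,x0) \<in> D" using p0 Dsym by (simp add: P_def)
    ultimately have "z = x0" using yz unfolding leafc_def P_def by blast
    thus False using yz p0 by (auto simp: P_def)
  qed
  have "insert y0 (fst ` P) \<subseteq> S" using p0 Dsym Smem by (auto simp: P_def)
  hence "card (insert y0 (fst ` P)) \<le> card S" using finS card_mono by blast
  hence "card P + 1 \<le> card S" using y0n finP card_image[OF injP] by simp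
  hence c4: "card D + 2 \<le> 2 * card S" using cD by simp
  have e1: "\<Delta> * card V = \<Delta> * card S + \<Delta> * card (V - S)" using c3 by (simp add: algebra_simps)
  have "\<Delta> * (card D + 2) \<le> \<Delta> * (2 * card S)" using c4 by (rule mult_le_mono2)
  hence e2: "\<Delta> * card D + 2 * \<Delta> \<le> 2 * (\<Delta> * card S)" by (simp add: algebra_simps)
  have e3: "\<Delta> * card D + 2 * \<Delta> \<le> \<Delta> * card V + card D" using e1 e2 c1 c2 by linarith
  show ?thesis
  proof (cases "\<Delta> = 0")
    case True thus ?thesis by simp
  next
    case False
    hence "(\<Delta> - 1) * card D + card D = \<Delta> * card D"
      by (metis Suc_pred' mult_Suc add.commute neq0_conv)
    thus ?thesis using e3 by linarith
  qed
qed

lemma finite_edges: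
  assumes "simple_graph V E" shows "finite (edges E)"
proof -
  have "edges E = (\<lambda>(u,v). {u,v}) ` {(u,v). E u v}" by (auto simp: edges_def)
  moreover have "{(u,v). E u v} \<subseteq> V \<times> V" using assms by (auto simp: simple_graph_def)
  moreover have "finite (V \<times> V)" using assms by (simp add: simple_graph_def)
  ultimately show ?thesis using finite_subset by (metis finite_imageI)
qed

lemma inj_lower:
  fixes V :: "'a::linorder set"
  assumes sg: "simple_graph V E" and reg: "regular V E \<Delta>"
    and tf: "\<And>x y z. E x y \<Longrightarrow> E y z \<Longrightarrow> E x z \<Longrightarrow> False"
    and D2: "\<Delta> \<ge> 2" and Vne: "V \<noteq> {}"
  shows "\<Delta> \<le> inj_chromatic_index E"
proof -
  have fin: "finite V" and inV: "\<And>u v. E u v \<Longrightarrow> u \<in> V \<and> v \<in> V"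
    using sg by (auto simp: simple_graph_def)
  have deg: "\<And>v. v \<in> V \<Longrightarrow> card {u \<in> V. E v u} = \<Delta>"
    using reg by (simp add: regular_def degree_def)
  have fE: "finite (edges E)" by (rule finite_edges[OF sg])
  have main: "\<Delta> \<le> card (c ` edges E)" if ic: "injective_edge_coloring E c" for c
  proof -
    define C where "C = c ` edges E"
    define Dc where "Dc = (\<lambda>\<alpha>. {(x,y). E x y \<and> c {x,y} = \<alpha>})"
    define Dall where "Dall = Sigma V (\<lambda>x. {y \<in> V. E x y})"
    have finC: "finite C" using fE by (simp add: C_def)
    have finDall: "finite Dall" using fin by (simp add: Dall_def)
    have cDall: "card Dall = \<Delta> * card V"
    proof -
      have "card Dall = (\<Sum>x\<in>V. card {y \<in> V. E x y})" unfolding Dall_def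
        using fin by (subst card_SigmaI) auto
      also have "\<dots> = (\<Sum>x\<in>V. \<Delta>)" using deg by (intro sum.cong) auto
      finally show ?thesis by (simp add: mult.commute)
    qed
    have DU: "Dall = (\<Union>\<alpha>\<in>C. Dc \<alpha>)"
      using inV by (auto simp: Dall_def Dc_def C_def edges_def)
    have finDc: "\<forall>\<alpha>\<in>C. finite (Dc \<alpha>)"
    proof
      fix \<alpha> assume "\<alpha> \<in> C"
      have "Dc \<alpha> \<subseteq> Dall" using inV by (auto simp: Dall_def Dc_def)
      thus "finite (Dc \<alpha>)" using finDall finite_subset by blast
    qed
    have "card Dall = (\<Sum>\<alpha>\<in>C. card (Dc \<alpha>))"
      unfolding DU by (rule card_UN_disjoint[OF finC finDc]) (auto simp: Dc_def)
    hence sumeq: "(\<Sum>\<alpha>\<in>C. card (Dc \<alpha>)) = \<Delta> * card V" using cDall by simp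
    have pos: "\<Delta> * card V > 0" using D2 Vne fin by (simp add: card_gt_0_iff)
    have Cne: "C \<noteq> {}" using sumeq pos by auto
    have each: "(\<Delta> - 1) * card (Dc \<alpha>) < \<Delta> * card V" if aC: "\<alpha> \<in> C" for \<alpha>
    proof -
      obtain e where e: "e \<in> edges E" "\<alpha> = c e" using aC by (auto simp: C_def)
      then obtain u v where uv: "e = {u,v}" "E u v" by (auto simp: edges_def)
      have "(u,v) \<in> Dc \<alpha>" using e uv by (simp add: Dc_def)
      hence "Dc \<alpha> \<noteq> {}" by auto
      have "(\<Delta> - 1) * card (Dc \<alpha>) + 2 * \<Delta> \<le> \<Delta> * card V"
        by (rule class_bound[OF sg reg _ ic _ \<open>Dc \<alpha> \<noteq> {}\<close>])
           (use tf in blast, simp add: Dc_def)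
      thus ?thesis using D2 by linarith
    qed
    have "(\<Sum>\<alpha>\<in>C. (\<Delta> - 1) * card (Dc \<alpha>)) < (\<Sum>\<alpha>\<in>C. \<Delta> * card V)"
      by (rule sum_strict_mono[OF finC Cne each])
    hence "(\<Delta> - 1) * (\<Delta> * card V) < card C * (\<Delta> * card V)"
      by (simp add: sum_distrib_left[symmetric] sumeq)
    hence "\<Delta> - 1 < card C" by simp
    thus ?thesis using D2 by (simp add: C_def)
  qed
  obtain f :: "'a set \<Rightarrow> nat" and n where f: "f ` edges E = {i. i < n}" "inj_on f (edges E)"
    using finite_imp_inj_to_nat_seg[OF fE] by blast
  have "injective_edge_coloring E f" using f(2) unfolding injective_edge_coloring_def inj_on_def by blast
  hence ex: "\<exists>k c. injective_edge_coloring E c \<and> card (c ` edges E) \<le> k" by blast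
  obtain c where "injective_edge_coloring E c" "card (c ` edges E) \<le> inj_chromatic_index E"
    using LeastI_ex[OF ex] unfolding inj_chromatic_index_def by blast
  thus ?thesis using main by (meson order_trans)
qed


definition toggle :: "'b \<Rightarrow> 'b set \<Rightarrow> 'b set" where
  "toggle e s = (if e \<in> s then s - {e} else insert e s)"

lemma toggle_mem: "x \<in> toggle e s \<longleftrightarrow> (x \<in> s) \<noteq> (x = e)"
  by (auto simp: toggle_def)

lemma toggle_toggle: "toggle e (toggle e s) = s"
  by (auto simp: toggle_def)

lemma toggle_sub: "s \<subseteq> A \<Longrightarrow> e \<in> A \<Longrightarrow> toggle e s \<subseteq> A"
  by (auto simp: toggle_def)

definition cvV :: "'a set \<Rightarrow> ('a \<Rightarrow> 'a \<Rightarrow> bool) \<Rightarrow> ('a \<times> 'a set set) set" where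
  "cvV V E = V \<times> Pow (edges E)"

definition cvE :: "'a set \<Rightarrow> ('a \<Rightarrow> 'a \<Rightarrow> bool) \<Rightarrow> ('a \<times> 'a set set) \<Rightarrow> ('a \<times> 'a set set) \<Rightarrow> bool" where
  "cvE V E p q \<longleftrightarrow> fst p \<in> V \<and> snd p \<subseteq> edges E \<and> E (fst p) (fst q)
      \<and> snd q = toggle {fst p, fst q} (snd p)"

lemma cover_girth:
  assumes sg: "simple_graph V E" and gi: "girth_at_least E g"
  shows "girth_at_least (cvE V E) (Suc g)"
  unfolding girth_at_least_def
proof (intro allI impI)
  fix cs assume cyc: "is_cycle (cvE V E) cs"
  have irr: "\<And>v. \<not> E v v" using sg by (simp add: simple_graph_def)
  define k where "k = length cs"
  have k3: "k \<ge> 3" and dcs: "distinct cs"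
    and adj: "\<And>i. i < k \<Longrightarrow> cvE V E (cs ! i) (cs ! ((i + 1) mod k))"
    using cyc by (auto simp: is_cycle_def k_def)
  define v where "v i = fst (cs ! i)" for i
  define s where "s i = snd (cs ! i)" for i
  have adjE: "E (v i) (v ((i + 1) mod k))" if "i < k" for i
    using adj[OF that] by (simp add: cvE_def v_def)
  have adjS: "s ((i + 1) mod k) = toggle {v i, v ((i + 1) mod k)} (s i)" if "i < k" for i
    using adj[OF that] by (simp add: cvE_def v_def s_def)
  show "Suc g \<le> length cs"
  proof (cases "distinct (map fst cs)")
    case True
    have vinj: "i = j" if "i < k" "j < k" "v i = v j" for i j
      using True that unfolding v_def k_def distinct_conv_nth by (simp; blast)
    define ed where "ed i = {v i, v ((i + 1) mod k)}" for i
    define cnt where "cnt j e = card {i. i < j \<and> ed i = e}" for j e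
    have claim: "\<forall>e. (e \<in> s (j mod k)) = ((e \<in> s 0) \<noteq> odd (cnt j e))" if "j \<le> k" for j
      using that
    proof (induction j)
      case 0
      thus ?case by (simp add: cnt_def)
    next
      case (Suc j)
      hence jk: "j < k" by simp
      have IH: "\<forall>e. (e \<in> s j) = ((e \<in> s 0) \<noteq> odd (cnt j e))"
        using Suc jk by simp
      have sS: "s (Suc j mod k) = toggle (ed j) (s j)"
        using adjS[OF jk] by (simp add: ed_def)
      have cS: "cnt (Suc j) e = cnt j e + (if ed j = e then 1 else 0)" for e
      proof (cases "ed j = e")
        case True
        hence "{i. i < Suc j \<and> ed i = e} = insert j {i. i < j \<and> ed i = e}" by auto
        thus ?thesis using True by (simp add: cnt_def)
      next
        case False
        hence "{i. i < Suc j \<and> ed i = e} = {i. i < j \<and> ed i = e}" by (auto simp: less_Suc_eq)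
        thus ?thesis using False by (simp add: cnt_def)
      qed
      show ?case
      proof
        fix e
        show "(e \<in> s (Suc j mod k)) = ((e \<in> s 0) \<noteq> odd (cnt (Suc j) e))"
          using IH sS cS[of e] by (auto simp: toggle_mem)
      qed
    qed
    have c1: "cnt k (ed 0) = 1"
    proof -
      have m1: "1 mod k = 1" and m2: "2 mod k = 2" using k3 by auto
      have "{i. i < k \<and> ed i = ed 0} = {0}"
      proof (intro equalityI subsetI)
        fix i assume "i \<in> {i. i < k \<and> ed i = ed 0}"
        hence ik: "i < k" and eq0: "ed i = ed 0" by auto
        have eq: "{v i, v ((i + 1) mod k)} = {v 0, v 1}" using eq0 m1 by (simp add: ed_def)
        from eq consider "v i = v 0" | "v i = v 1" "v ((i + 1) mod k) = v 0"
          by (auto simp: doubleton_eq_iff)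
        thus "i \<in> {0}"
        proof cases
          case 1 thus ?thesis using vinj[of i 0] ik k3 by simp
        next
          case 2
          hence "i = 1" using vinj[of i 1] ik k3 by simp
          hence "v 2 = v 0" using 2 m2 by (simp add: numeral_2_eq_2)
          hence "(2::nat) = 0" using vinj[of 2 0] k3 by simp
          thus ?thesis by simp
        qed
      next
        fix i assume "i \<in> {0::nat}"
        thus "i \<in> {i. i < k \<and> ed i = ed 0}" using k3 by simp
      qed
      thus ?thesis by (simp add: cnt_def)
    qed
    have "(ed 0 \<in> s (k mod k)) = ((ed 0 \<in> s 0) \<noteq> odd (cnt k (ed 0)))"
      using claim[of k] by simp
    hence False using c1 by simp
    thus ?thesis ..
  next
    case False
    define P where "P d \<longleftrightarrow> d > 0 \<and> (\<exists>a. a + d < k \<and> v a = v (a + d))" for d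
    obtain i j where ij: "i < k" "j < k" "i \<noteq> j" "v i = v j"
      using False by (auto simp: distinct_conv_nth v_def k_def)
    have "\<exists>d. P d"
    proof (cases "i < j")
      case True
      hence "P (j - i)" using ij unfolding P_def by (intro conjI exI[of _ i]) auto
      thus ?thesis ..
    next
      case False
      hence "P (i - j)" using ij unfolding P_def by (intro conjI exI[of _ j]) auto
      thus ?thesis ..
    qed
    then obtain d where Pd: "P d" and dmin: "\<And>d'. d' < d \<Longrightarrow> \<not> P d'"
      using exists_least_iff[of P] by blast
    then obtain a where a: "a + d < k" "v a = v (a + d)" and d0: "d > 0" by (auto simp: P_def)
    have nx: "(i + 1) mod k = i + 1" if "i + 1 < k" for i using that by simp
    have d1: "d \<noteq> 1"
    proof
      assume "d = 1"
      hence "E (v a) (v a)" using adjE[of a] a nx[of a] by simp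
      thus False using irr by blast
    qed
    have d2: "d \<noteq> 2"
    proof
      assume d2: "d = 2"
      have "s (a + 2) = toggle {v (a+1), v (a+2)} (toggle {v a, v (a+1)} (s a))"
        using adjS[of a] adjS[of "a+1"] nx[of a] nx[of "a+1"] a d2 by simp
      also have "{v (a+1), v (a+2)} = {v a, v (a+1)}" using a d2 by auto
      finally have "s (a + 2) = s a" by (simp add: toggle_toggle)
      hence "cs ! (a + 2) = cs ! a" using a d2 by (simp add: s_def v_def prod_eq_iff)
      thus False using dcs a d2 by (simp add: nth_eq_iff_index_eq k_def)
    qed
    define seg where "seg = map v [a..<a + d]"
    have segn: "seg ! i = v (a + i)" if "i < d" for i using that by (simp add: seg_def)
    have "is_cycle E seg"
      unfolding is_cycle_def
    proof (intro conjI allI impI)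
      show "3 \<le> length seg" using d0 d1 d2 by (simp add: seg_def)
      show "distinct seg"
        unfolding distinct_conv_nth
      proof (intro allI impI)
        fix i j assume ij: "i < length seg" "j < length seg" "i \<noteq> j"
        show "seg ! i \<noteq> seg ! j"
        proof
          assume eq: "seg ! i = seg ! j"
          have id: "i < d" "j < d" using ij by (auto simp: seg_def)
          show False
          proof (cases "i < j")
            case True
            have "P (j - i)" unfolding P_def
              using True id eq segn[of i] segn[of j] a by (intro conjI exI[of _ "a + i"]) auto
            thus False using dmin[of "j - i"] True id by simp
          next
            case False
            hence ji: "j < i" using ij by simp
            have "P (i - j)" unfolding P_def
              using ji id eq segn[of i] segn[of j] a by (intro conjI exI[of _ "a + j"]) auto
            thus False using dmin[of "i - j"] ji id by simp
          qed
        qed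
      qed
      fix i assume "i < length seg"
      hence id: "i < d" by (simp add: seg_def)
      show "E (seg ! i) (seg ! ((i + 1) mod length seg))"
      proof (cases "i + 1 < d")
        case True
        thus ?thesis using adjE[of "a + i"] nx[of "a + i"] a segn id by (simp add: seg_def)
      next
        case False
        hence dd: "d = Suc i" using id by simp
        have l: "length seg = d" by (simp add: seg_def)
        have "seg ! ((i + 1) mod length seg) = v a" using l dd segn[of 0] d0 by simp
        moreover have "seg ! i = v (a + i)" using segn id by simp
        moreover have "E (v (a + i)) (v a)"
          using adjE[of "a + i"] nx[of "a + i"] a dd by simp
        ultimately show ?thesis by simp
      qed
    qed
    hence "g \<le> d" using gi by (auto simp: girth_at_least_def seg_def)
    thus ?thesis using a by (simp add: k_def)
  qed
qed


definition good :: "'a set \<Rightarrow> ('a \<Rightarrow> 'a \<Rightarrow> bool) \<Rightarrow> nat \<Rightarrow> nat \<Rightarrow> bool" where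
  "good V E \<Delta> g \<longleftrightarrow> simple_graph V E \<and> regular V E \<Delta> \<and> bipartite V E \<and> girth_at_least E g \<and> V \<noteq> {}"

lemma cover_good:
  assumes "good V E \<Delta> g"
  shows "good (cvV V E) (cvE V E) \<Delta> (Suc g)"
proof -
  have sg: "simple_graph V E" and reg: "regular V E \<Delta>" and bp: "bipartite V E"
    and gi: "girth_at_least E g" and ne: "V \<noteq> {}" using assms by (auto simp: good_def)
  have fin: "finite V" and inV: "\<And>u v. E u v \<Longrightarrow> u \<in> V \<and> v \<in> V"
    and sym: "\<And>u v. E u v \<Longrightarrow> E v u" and irr: "\<And>v. \<not> E v v"
    using sg by (auto simp: simple_graph_def)
  have deg: "\<And>v. v \<in> V \<Longrightarrow> card {u \<in> V. E v u} = \<Delta>"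
    using reg by (simp add: regular_def degree_def)
  have edI: "\<And>x y. E x y \<Longrightarrow> {x,y} \<in> edges E" by (auto simp: edges_def)
  have fE: "finite (edges E)" by (rule finite_edges[OF sg])
  have cvin: "p \<in> cvV V E \<and> q \<in> cvV V E" if "cvE V E p q" for p q
    using that inV[of "fst p" "fst q"] edI[of "fst p" "fst q"]
      toggle_sub[of "snd p" "edges E" "{fst p, fst q}"] by (auto simp: cvE_def cvV_def mem_Times_iff)
  have c1: "finite (cvV V E)" using fin fE by (simp add: cvV_def)
  have c2: "cvE V E v u" if a: "cvE V E u v" for u v
  proof -
    have "{fst v, fst u} = {fst u, fst v}" by blast
    thus "cvE V E v u" using a cvin[OF a] sym
      by (auto simp: cvE_def cvV_def toggle_toggle)
  qed
  have c3: "\<not> cvE V E v v" for v using irr by (simp add: cvE_def)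
  have sg': "simple_graph (cvV V E) (cvE V E)"
    unfolding simple_graph_def using c1 c2 c3 cvin by blast
  have reg': "regular (cvV V E) (cvE V E) \<Delta>"
    unfolding regular_def degree_def
  proof
    fix p assume p: "p \<in> cvV V E"
    obtain x s where ps: "p = (x, s)" by (cases p)
    have xV: "x \<in> V" and sE: "s \<subseteq> edges E" using p ps by (auto simp: cvV_def)
    have "{q \<in> cvV V E. cvE V E p q} = (\<lambda>u. (u, toggle {x,u} s)) ` {u \<in> V. E x u}"
    proof (intro equalityI subsetI)
      fix q assume "q \<in> {q \<in> cvV V E. cvE V E p q}"
      hence "cvE V E p q" "q \<in> cvV V E" by auto
      thus "q \<in> (\<lambda>u. (u, toggle {x,u} s)) ` {u \<in> V. E x u}"
        using ps by (cases q) (auto simp: cvE_def cvV_def)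
    next
      fix q assume "q \<in> (\<lambda>u. (u, toggle {x,u} s)) ` {u \<in> V. E x u}"
      then obtain u where u: "u \<in> V" "E x u" "q = (u, toggle {x,u} s)" by auto
      have "cvE V E p q" using u ps xV sE by (simp add: cvE_def)
      thus "q \<in> {q \<in> cvV V E. cvE V E p q}" using cvin by blast
    qed
    moreover have "inj_on (\<lambda>u. (u, toggle {x,u} s)) {u \<in> V. E x u}" by (auto simp: inj_on_def)
    ultimately show "card {q \<in> cvV V E. cvE V E p q} = \<Delta>"
      using deg[OF xV] by (simp add: card_image)
  qed
  have bp': "bipartite (cvV V E) (cvE V E)"
  proof -
    obtain A B where AB: "A \<union> B = V" "A \<inter> B = {}"
      "\<And>u v. E u v \<Longrightarrow> (u \<in> A \<and> v \<in> B) \<or> (u \<in> B \<and> v \<in> A)"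
      using bp unfolding bipartite_def by blast
    have c1: "A \<times> Pow (edges E) \<union> B \<times> Pow (edges E) = cvV V E" using AB(1) by (auto simp: cvV_def)
    have c2: "A \<times> Pow (edges E) \<inter> B \<times> Pow (edges E) = {}" using AB(2) by auto
    have c3: "(u \<in> A \<times> Pow (edges E) \<and> v \<in> B \<times> Pow (edges E) \<or>
            u \<in> B \<times> Pow (edges E) \<and> v \<in> A \<times> Pow (edges E))" if a: "cvE V E u v" for u v
    proof -
      have "u \<in> cvV V E" "v \<in> cvV V E" using cvin[OF a] by auto
      thus ?thesis
        using AB(3)[of "fst u" "fst v"] a by (cases u, cases v) (auto simp: cvE_def cvV_def)
    qed
    show ?thesis unfolding bipartite_def using c1 c2 c3 by blast
  qed
  have ne': "cvV V E \<noteq> {}" using ne by (auto simp: cvV_def)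
  show ?thesis using sg' reg' bp' ne' cover_girth[OF sg gi] by (simp add: good_def)
qed

lemma transfer_nat:
  fixes V :: "'b set"
  assumes "good V E \<Delta> g"
  shows "\<exists>(V' :: nat set) E'. good V' E' \<Delta> g"
proof -
  have sg: "simple_graph V E" and reg: "regular V E \<Delta>" and bp: "bipartite V E"
    and gi: "girth_at_least E g" and ne: "V \<noteq> {}" using assms by (auto simp: good_def)
  have fin: "finite V" and inV: "\<And>u v. E u v \<Longrightarrow> u \<in> V \<and> v \<in> V"
    and sym: "\<And>u v. E u v \<Longrightarrow> E v u" and irr: "\<And>v. \<not> E v v"
    using sg by (auto simp: simple_graph_def)
  have deg: "\<And>v. v \<in> V \<Longrightarrow> card {u \<in> V. E v u} = \<Delta>"
    using reg by (simp add: regular_def degree_def)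
  obtain f :: "'b \<Rightarrow> nat" and n where f: "f ` V = {i. i < n}" "inj_on f V"
    using finite_imp_inj_to_nat_seg[OF fin] by blast
  define V' where "V' = {i::nat. i < n}"
  define h where "h = inv_into V f"
  have bf: "bij_betw f V V'" using f by (simp add: bij_betw_def V'_def)
  have bh: "bij_betw h V' V" unfolding h_def by (rule bij_betw_inv_into[OF bf])
  have hV: "x \<in> V' \<Longrightarrow> h x \<in> V" for x using bh by (auto simp: bij_betw_def)
  have hinj: "inj_on h V'" using bh by (simp add: bij_betw_def)
  have hf: "u \<in> V \<Longrightarrow> h (f u) = u" for u unfolding h_def using f(2) by simp
  have fV: "u \<in> V \<Longrightarrow> f u \<in> V'" for u using f(1) by (auto simp: V'_def)
  define E' where "E' x y \<longleftrightarrow> x \<in> V' \<and> y \<in> V' \<and> E (h x) (h y)" for x y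
  have sg': "simple_graph V' E'"
    using sym irr by (auto simp: simple_graph_def E'_def V'_def)
  have reg': "regular V' E' \<Delta>"
    unfolding regular_def degree_def
  proof
    fix x assume x: "x \<in> V'"
    have "h ` {y \<in> V'. E' x y} = {u \<in> V. E (h x) u}"
    proof (intro equalityI subsetI)
      fix u assume "u \<in> h ` {y \<in> V'. E' x y}"
      thus "u \<in> {u \<in> V. E (h x) u}" using hV by (auto simp: E'_def)
    next
      fix u assume "u \<in> {u \<in> V. E (h x) u}"
      hence u: "u \<in> V" "E (h x) u" by auto
      hence "f u \<in> {y \<in> V'. E' x y}" using fV hf x by (simp add: E'_def)
      thus "u \<in> h ` {y \<in> V'. E' x y}" using hf[OF u(1)] by (metis image_eqI)
    qed
    moreover have "inj_on h {y \<in> V'. E' x y}" using hinj by (rule inj_on_subset) auto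
    ultimately show "card {y \<in> V'. E' x y} = \<Delta>"
      using deg[OF hV[OF x]] card_image by metis
  qed
  have bp': "bipartite V' E'"
  proof -
    obtain A B where AB: "A \<union> B = V" "A \<inter> B = {}"
      "\<And>u v. E u v \<Longrightarrow> (u \<in> A \<and> v \<in> B) \<or> (u \<in> B \<and> v \<in> A)"
      using bp unfolding bipartite_def by blast
    have c1: "{x \<in> V'. h x \<in> A} \<union> {x \<in> V'. h x \<in> B} = V'" using AB(1) hV by auto
    have c2: "{x \<in> V'. h x \<in> A} \<inter> {x \<in> V'. h x \<in> B} = {}" using AB(2) by auto
    have c3: "\<forall>u v. E' u v \<longrightarrow> (u \<in> {x \<in> V'. h x \<in> A} \<and> v \<in> {x \<in> V'. h x \<in> B} \<or>
            u \<in> {x \<in> V'. h x \<in> B} \<and> v \<in> {x \<in> V'. h x \<in> A})"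
      using AB(3) by (auto simp: E'_def)
    show ?thesis unfolding bipartite_def using c1 c2 c3 by blast
  qed
  have gi': "girth_at_least E' g"
    unfolding girth_at_least_def
  proof (intro allI impI)
    fix cs assume cyc: "is_cycle E' cs"
    have sub: "set cs \<subseteq> V'"
    proof
      fix x assume "x \<in> set cs"
      then obtain i where i: "i < length cs" "cs ! i = x" by (auto simp: in_set_conv_nth)
      thus "x \<in> V'" using cyc by (auto simp: is_cycle_def E'_def)
    qed
    have l0: "length cs > 0" using cyc by (auto simp: is_cycle_def)
    have "is_cycle E (map h cs)"
      unfolding is_cycle_def
    proof (intro conjI allI impI)
      show "3 \<le> length (map h cs)" using cyc by (simp add: is_cycle_def)
      show "distinct (map h cs)" using cyc inj_on_subset[OF hinj sub]
        by (simp add: is_cycle_def distinct_map)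
      fix i assume i: "i < length (map h cs)"
      have m: "(i + 1) mod length cs < length cs" using l0 by simp
      have "E' (cs ! i) (cs ! ((i + 1) mod length cs))" using cyc i by (simp add: is_cycle_def)
      thus "E (map h cs ! i) (map h cs ! ((i + 1) mod length (map h cs)))"
        using i m by (simp add: E'_def)
    qed
    thus "g \<le> length cs" using gi by (auto simp: girth_at_least_def)
  qed
  have ne': "V' \<noteq> {}" using ne fV by auto
  show ?thesis using sg' reg' bp' gi' ne' unfolding good_def by blast
qed

lemma base_good:
  assumes "\<Delta> \<ge> 1"
  shows "\<exists>(V :: nat set) E. good V E \<Delta> 0"
proof -
  define V where "V = {0..<2*\<Delta>}"
  define E where "E u v \<longleftrightarrow> (u < \<Delta> \<and> \<Delta> \<le> v \<and> v < 2*\<Delta>) \<or> (v < \<Delta> \<and> \<Delta> \<le> u \<and> u < 2*\<Delta>)" for u v :: nat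
  have sg: "simple_graph V E" by (auto simp: simple_graph_def V_def E_def)
  have reg: "regular V E \<Delta>"
    unfolding regular_def degree_def
  proof
    fix v assume v: "v \<in> V"
    show "card {u \<in> V. E v u} = \<Delta>"
    proof (cases "v < \<Delta>")
      case True
      hence "{u \<in> V. E v u} = {\<Delta>..<2*\<Delta>}" by (auto simp: V_def E_def)
      thus ?thesis by simp
    next
      case False
      hence "{u \<in> V. E v u} = {0..<\<Delta>}" using v by (auto simp: V_def E_def)
      thus ?thesis by simp
    qed
  qed
  have bp: "bipartite V E" unfolding bipartite_def
    by (rule exI[of _ "{0..<\<Delta>}"], rule exI[of _ "{\<Delta>..<2*\<Delta>}"]) (auto simp: V_def E_def)
  have gi: "girth_at_least E 0" by (simp add: girth_at_least_def)
  have "V \<noteq> {}" using assms by (auto simp: V_def)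
  thus ?thesis using sg reg bp gi unfolding good_def by blast
qed

lemma all_good:
  assumes "\<Delta> \<ge> 1"
  shows "\<exists>(V :: nat set) E. good V E \<Delta> g"
proof (induction g)
  case 0 show ?case by (rule base_good[OF assms])
next
  case (Suc g)
  then obtain V :: "nat set" and E where "good V E \<Delta> g" by blast
  from cover_good[OF this] show ?case by (rule transfer_nat)
qed

lemma bip_tf:
  assumes "bipartite V E" "E x y" "E y z" "E x z" shows False
  using assms unfolding bipartite_def by blast

theorem proposition1p8:
  fixes \<Delta> g :: nat
  assumes "\<Delta> \<ge> 3" and "g \<ge> 3"
  shows "\<exists>(V :: nat set) E. simple_graph V E \<and> regular V E \<Delta> \<and> bipartite V E
           \<and> girth_at_least E g \<and> inj_chromatic_index E \<ge> \<Delta>"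
proof -
  obtain V :: "nat set" and E where G: "good V E \<Delta> g" using all_good[of \<Delta> g] assms by auto
  hence "simple_graph V E" "regular V E \<Delta>" "bipartite V E" "girth_at_least E g" "V \<noteq> {}"
    by (auto simp: good_def)
  moreover have "\<Delta> \<le> inj_chromatic_index E"
    using calculation assms bip_tf[OF calculation(3)] by (intro inj_lower) auto
  ultimately show ?thesis by blast
qed

end
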